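(* Let $G\in\mathscr M_+([0,\infty))$ have no atoms in $(0,\infty)$ (i.e. $G(\{x\})=0$ for all $x>0$) and satisfy $\int_{(0,\infty)}\frac{G(x)}{\sqrt x}dx<\infty$. Then for every admissible family $(\varphi_\varepsilon)$, $$\lim_{\varepsilon\to0}\mathscr Q_3^{(2)}(\varphi_\varepsilon,G)=0.$$
   Context: $\mathscr M_+([0,\infty))$ is the set of nonnegative finite Radon measures on $[0,\infty)$; we write $\int_A\varphi(x)G(x)dx$ for $\int_A\varphi\,dG$. $C^1_b([0,\infty))$ denotes bounded $C^1$ functions with bounded derivative. For continuous $\varphi$: $\Lambda(\varphi)(x,y)=\varphi(x+y)+\varphi(|x-y|)-2\varphi(\max\{x,y\})$ and $\mathscr Q_3^{(2)}(\varphi,G)=\iint_{(0,\infty)^2}\frac{\Lambda(\varphi)(x,y)}{\sqrt{xy}}G(x)G(y)dxdy$. Admissible family: $(\varphi_\varepsilon)_{\varepsilon>0}$ with $\varphi_\varepsilon(x)=\varphi(x/\varepsilon)$, where $\varphi\in C^1_b([0,\infty))$ is nonnegative and convex with $\varphi(0)=1$ and $\lim_{x\to\infty}\sqrt x\,\varphi(x)=0$. *)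

theory Defs
  imports "HOL-Analysis.Analysis"
begin

text \<open>Nonnegative finite (Radon) measures on [0,\<infinity>), represented as finite Borel measures
  on the real line with no mass on the negative half-line.\<close>
definition nonneg_finite_measure :: "real measure \<Rightarrow> bool" where
  "nonneg_finite_measure G \<longleftrightarrow>
     sets G = sets borel \<and> finite_measure G \<and> emeasure G {..<0} = 0"

definition Lambda :: "(real \<Rightarrow> real) \<Rightarrow> real \<Rightarrow> real \<Rightarrow> real" where
  "Lambda \<phi> x y = \<phi> (x + y) + \<phi> \<bar>x - y\<bar> - 2 * \<phi> (max x y)"

definition Q32 :: "(real \<Rightarrow> real) \<Rightarrow> real measure \<Rightarrow> real" where
  "Q32 \<phi> G = (\<integral>p \<in> {0<..} \<times> {0<..}.
       Lambda \<phi> (fst p) (snd p) / sqrt (fst p * snd p) \<partial>(G \<Otimes>\<^sub>M G))"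

definition C1b_nonneg :: "(real \<Rightarrow> real) \<Rightarrow> bool" where
  "C1b_nonneg \<phi> \<longleftrightarrow> (\<exists>\<phi>'. (\<forall>x\<ge>0. (\<phi> has_real_derivative \<phi>' x) (at x within {0..}))
      \<and> continuous_on {0..} \<phi>' \<and> bounded (\<phi>' ` {0..}) \<and> bounded (\<phi> ` {0..}))"

definition admissible_profile :: "(real \<Rightarrow> real) \<Rightarrow> bool" where
  "admissible_profile \<phi> \<longleftrightarrow> C1b_nonneg \<phi> \<and> (\<forall>x\<ge>0. \<phi> x \<ge> 0) \<and>
      convex_on {0..} \<phi> \<and> \<phi> 0 = 1 \<and> ((\<lambda>x. sqrt x * \<phi> x) \<longlongrightarrow> 0) at_top"

end

theory Submission
  imports Defs
begin

lemma psi_lim: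
  fixes \<psi> :: "real \<Rightarrow> real" and S :: "nat \<Rightarrow> real"
  assumes psi: "(\<psi> \<longlongrightarrow> 0) at_top" and S: "S \<longlonglongrightarrow> 0" "\<And>n. 0 < S n" and c: "c > 0"
  shows "(\<lambda>n. \<psi> (c / S n)) \<longlonglongrightarrow> 0"
proof -
  have "filterlim S (at_right 0) sequentially"
    using S by (intro tendsto_imp_filterlim_at_right) auto
  then have "filterlim (\<lambda>n. inverse (S n)) at_top sequentially"
    using filterlim_inverse_at_top_right filterlim_compose by blast
  then have "filterlim (\<lambda>n. c * inverse (S n)) at_top sequentially"
    by (rule filterlim_tendsto_pos_mult_at_top[OF tendsto_const c])
  then have "filterlim (\<lambda>n. c / S n) at_top sequentially" by (simp add: divide_inverse)
  then show ?thesis using psi filterlim_compose by blast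
qed

theorem mainTheorem17:
  fixes G :: "real measure" and \<phi> :: "real \<Rightarrow> real"
  assumes "nonneg_finite_measure G"
    and "\<forall>x>0. emeasure G {x} = 0"
    and "(\<integral>\<^sup>+ x \<in> {0<..}. ennreal (1 / sqrt x) \<partial>G) < \<infinity>"
    and "admissible_profile \<phi>"
  shows "((\<lambda>\<epsilon>. Q32 (\<lambda>x. \<phi> (x / \<epsilon>)) G) \<longlongrightarrow> 0) (at_right 0)"
proof -
  have sG: "sets G = sets borel" and fin: "finite_measure G"
    using assms(1) unfolding nonneg_finite_measure_def by auto
  interpret G: finite_measure G by (rule fin)
  interpret GG: pair_sigma_finite G G by unfold_locales
  have sp: "space G = UNIV" using sets_eq_imp_space_eq[OF sG] by simp
  have spGG: "space (G \<Otimes>\<^sub>M G) = UNIV" by (simp add: space_pair_measure sp)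
  obtain \<phi>' where der: "\<And>x. x \<ge> 0 \<Longrightarrow> (\<phi> has_real_derivative \<phi>' x) (at x within {0..})"
    and bd: "bounded (\<phi> ` {0..})"
    using assms(4) unfolding admissible_profile_def C1b_nonneg_def by blast
  have sq: "((\<lambda>x. sqrt x * \<phi> x) \<longlongrightarrow> 0) at_top"
    using assms(4) unfolding admissible_profile_def by blast
  obtain B where B: "B > 0" "\<And>x. x \<ge> 0 \<Longrightarrow> \<bar>\<phi> x\<bar> \<le> B"
    using bd unfolding bounded_pos by auto
  have cont: "continuous_on {0..} \<phi>"
    by (rule DERIV_continuous_on[OF der]) auto
  define \<psi> where "\<psi> x = \<phi> (max x 0)" for x
  have psicont: "continuous_on UNIV \<psi>"
    unfolding \<psi>_def
    by (rule continuous_on_compose2[OF cont]) (auto intro!: continuous_intros)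
  have psim[measurable]: "\<psi> \<in> borel_measurable borel"
    by (rule borel_measurable_continuous_onI[OF psicont])
  have psiB: "\<bar>\<psi> x\<bar> \<le> B" for x unfolding \<psi>_def by (rule B(2)) simp
  have philim: "(\<phi> \<longlongrightarrow> 0) at_top"
  proof -
    have "((\<lambda>x. (sqrt x * \<phi> x) * inverse (sqrt x)) \<longlongrightarrow> 0 * 0) at_top"
      by (intro tendsto_mult sq tendsto_inverse_0_at_top sqrt_at_top)
    then have "((\<lambda>x. (sqrt x * \<phi> x) * inverse (sqrt x)) \<longlongrightarrow> 0) at_top" by simp
    then show ?thesis
      by (rule Lim_transform_eventually)
        (auto intro!: eventually_mono[OF eventually_gt_at_top[of 0]])
  qed
  have psilim: "(\<psi> \<longlongrightarrow> 0) at_top"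
    using philim by (rule Lim_transform_eventually)
      (auto simp: \<psi>_def intro!: eventually_mono[OF eventually_gt_at_top[of 0]])
  define A :: "(real \<times> real) set" where "A = {0<..} \<times> {0<..}"
  have sGG: "sets (G \<Otimes>\<^sub>M G) = sets (borel \<Otimes>\<^sub>M borel)" using sG by (rule sets_pair_measure_cong) (rule sG)
  have sGG': "sets (G \<Otimes>\<^sub>M G) = sets (borel :: (real \<times> real) measure)" using sG 
    by (metis borel_prod sets_pair_measure_cong)
  have Asets: "A \<in> sets (G \<Otimes>\<^sub>M G)" unfolding sGG' A_def
    by (intro borel_open open_Times open_greaterThan)
  define F where "F e p = Lambda (\<lambda>x. \<psi> (x / e)) (fst p) (snd p) / sqrt (fst p * snd p)" for e p
  define s where "s e p = indicator A p *\<^sub>R F e p" for e p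
  have Qeq: "Q32 (\<lambda>x. \<phi> (x / e)) G = integral\<^sup>L (G \<Otimes>\<^sub>M G) (s e)" if "e > 0" for e
  proof -
    have "Q32 (\<lambda>x. \<phi> (x / e)) G = (\<integral>p \<in> A. F e p \<partial>(G \<Otimes>\<^sub>M G))"
      unfolding Q32_def A_def[symmetric]
    proof (rule set_lebesgue_integral_cong[OF Asets], intro allI impI)
      fix p :: "real \<times> real" assume "p \<in> A"
      then have "fst p > 0" "snd p > 0" by (auto simp: A_def mem_Times_iff)
      then have "(fst p + snd p) / e \<ge> 0" "\<bar>fst p - snd p\<bar> / e \<ge> 0" "max (fst p) (snd p) / e \<ge> 0"
        using that by auto
      then show "Lambda (\<lambda>x. \<phi> (x / e)) (fst p) (snd p) / sqrt (fst p * snd p) = F e p"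
        unfolding F_def Lambda_def \<psi>_def by (simp add: max_absorb1)
    qed
    then show ?thesis by (simp add: set_lebesgue_integral_def s_def[abs_def])
  qed
  have smeas: "s e \<in> borel_measurable (G \<Otimes>\<^sub>M G)" for e
    unfolding measurable_cong_sets[OF sGG refl] s_def F_def A_def Lambda_def by measurable
  define w where "w p = indicator A p * (4 * B / sqrt (fst p * snd p))" for p
  have wint: "integrable (G \<Otimes>\<^sub>M G) w"
  proof (rule integrableI_nonneg)
    show wm: "w \<in> borel_measurable (G \<Otimes>\<^sub>M G)"
      unfolding measurable_cong_sets[OF sGG refl] w_def A_def by measurable
    show "AE x in G \<Otimes>\<^sub>M G. 0 \<le> w x"
      using B by (intro AE_I2) (auto simp: w_def A_def indicator_def mem_Times_iff)
    define a where "a x = ennreal (1 / sqrt x) * indicator {0<..} x" for x :: real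
    define I where "I = (\<integral>\<^sup>+ x. a x \<partial>G)"
    have I: "I < \<infinity>" using assms(3) by (simp add: I_def a_def)
    have am: "a \<in> borel_measurable G"
      unfolding measurable_cong_sets[OF sG refl] a_def by measurable
    have wsplit: "ennreal (w (x, y)) = (ennreal (4 * B) * a x) * a y" for x y
    proof (cases "x > 0 \<and> y > 0")
      case True
      then have "4 * B / sqrt (x * y) = (4 * B) * (1 / sqrt x) * (1 / sqrt y)"
        by (simp add: real_sqrt_mult)
      moreover have "ennreal ((4 * B) * (1 / sqrt x) * (1 / sqrt y))
          = ennreal (4 * B) * ennreal (1 / sqrt x) * ennreal (1 / sqrt y)"
        using True B by (metis ennreal_mult less_eq_real_def mult_nonneg_nonneg real_sqrt_ge_zero
           zero_le_divide_1_iff zero_le_numeral)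
      ultimately show ?thesis using True
        unfolding w_def a_def A_def by (simp add: real_sqrt_mult)
    next
      case False
      then show ?thesis by (auto simp: w_def a_def A_def)
    qed
    have "(\<integral>\<^sup>+ p. ennreal (w p) \<partial>(G \<Otimes>\<^sub>M G)) = (\<integral>\<^sup>+ x. \<integral>\<^sup>+ y. ennreal (w (x, y)) \<partial>G \<partial>G)"
      using wm by (intro G.nn_integral_fst[symmetric]) measurable
    also have "\<dots> = (\<integral>\<^sup>+ x. (ennreal (4 * B) * a x) * I \<partial>G)"
      unfolding wsplit I_def by (intro nn_integral_cong nn_integral_cmult am)
    also have "\<dots> = ennreal (4 * B) * I * I"
      using am by (simp add: nn_integral_multc nn_integral_cmult I_def)
    also have "\<dots> < \<infinity>" using I by (simp add: ennreal_mult_less_top)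
    finally show "(\<integral>\<^sup>+ p. ennreal (w p) \<partial>(G \<Otimes>\<^sub>M G)) < \<infinity>" .
  qed
  have bound: "norm (s e p) \<le> w p" for e p
  proof (cases "p \<in> A")
    case True
    then have pos: "sqrt (fst p * snd p) > 0" by (auto simp: A_def mem_Times_iff)
    have "\<bar>Lambda (\<lambda>x. \<psi> (x / e)) (fst p) (snd p)\<bar> \<le> 4 * B"
      unfolding Lambda_def using psiB[of "(fst p + snd p) / e"] psiB[of "\<bar>fst p - snd p\<bar> / e"]
        psiB[of "max (fst p) (snd p) / e"] by linarith
    then have "\<bar>F e p\<bar> \<le> 4 * B / sqrt (fst p * snd p)"
      unfolding F_def abs_divide using pos by (simp add: divide_right_mono)
    then show ?thesis using True by (simp add: s_def w_def)
  next
    case False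
    then show ?thesis by (simp add: s_def w_def)
  qed
  have ae: "AE p in G \<Otimes>\<^sub>M G. p \<in> A \<longrightarrow> fst p \<noteq> snd p"
  proof (rule GG.AE_pair_measure)
    have e: "{p \<in> space (G \<Otimes>\<^sub>M G). p \<in> A \<longrightarrow> fst p \<noteq> snd p}
       = - A \<union> {p. fst p \<noteq> snd p}"
      using spGG by auto
    have o: "open {p::real\<times>real. fst p \<noteq> snd p}"
      by (intro open_Collect_neq continuous_intros)
    show "{p \<in> space (G \<Otimes>\<^sub>M G). p \<in> A \<longrightarrow> fst p \<noteq> snd p} \<in> sets (G \<Otimes>\<^sub>M G)"
      unfolding e sGG' unfolding A_def
      by (intro sets.Un borel_open o borel_closed closed_Compl open_Times open_greaterThan)
    show "AE x in G. AE y in G. (x, y) \<in> A \<longrightarrow> fst (x, y) \<noteq> snd (x, y)"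
    proof (rule AE_I2)
      fix x assume "x \<in> space G"
      show "AE y in G. (x, y) \<in> A \<longrightarrow> fst (x, y) \<noteq> snd (x, y)"
      proof (cases "x > 0")
        case True
        have "{x} \<in> null_sets G"
          using assms(2) True sG by (intro null_setsI) auto
        then show ?thesis by (rule AE_I') auto
      next
        case False
        then show ?thesis by (intro AE_I2) (auto simp: A_def)
      qed
    qed
  qed
  have lim: "(\<lambda>n. s (S n) p) \<longlonglongrightarrow> 0" if "p \<in> A \<longrightarrow> fst p \<noteq> snd p" "S \<longlonglongrightarrow> 0" "\<And>n. 0 < S n" for p S
  proof (cases "p \<in> A")
    case True
    then have "fst p > 0" "snd p > 0" "fst p \<noteq> snd p" using that(1) by (auto simp: A_def mem_Times_iff)
    then have c: "fst p + snd p > 0" "\<bar>fst p - snd p\<bar> > 0" "max (fst p) (snd p) > 0" by auto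
    have "(\<lambda>n. (\<psi> ((fst p + snd p) / S n) + \<psi> (\<bar>fst p - snd p\<bar> / S n) - 2 * \<psi> (max (fst p) (snd p) / S n))
       / sqrt (fst p * snd p)) \<longlonglongrightarrow> (0 + 0 - 2 * 0) / sqrt (fst p * snd p)"
      using \<open>fst p > 0\<close> \<open>snd p > 0\<close>
      by (intro tendsto_intros psi_lim[OF psilim that(2,3)] c) simp
    then show ?thesis using True by (simp add: s_def F_def Lambda_def)
  next
    case False
    then show ?thesis by (simp add: s_def)
  qed
  show ?thesis
  proof (rule tendsto_at_right_sequentially[of 0 1])
    fix S :: "nat \<Rightarrow> real" assume S: "\<And>n. 0 < S n" "S \<longlonglongrightarrow> 0"
    have "(\<lambda>n. integral\<^sup>L (G \<Otimes>\<^sub>M G) (s (S n))) \<longlonglongrightarrow> integral\<^sup>L (G \<Otimes>\<^sub>M G) (\<lambda>_. 0::real)"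
      by (rule integral_dominated_convergence[where w=w])
        (use smeas wint bound lim S in \<open>auto intro: eventually_mono[OF ae]\<close>)
    then show "(\<lambda>n. Q32 (\<lambda>x. \<phi> (x / S n)) G) \<longlonglongrightarrow> 0"
      using Qeq S by simp
  qed simp
qed
end
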